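(* For any time warps $f,g$: (a) $f\backslash g=f^{r}g\vee(\top f)^{r}\vee g^{o}$; (b) $g/f=g f^{\ell}\vee (f^{\ell})^{o}$.
   Context: Let $\overline{\omega}=\omega\cup\{\omega\}$ be the natural numbers with a top element $\omega$ adjoined, with its natural total order. A time warp is a monotone map $f\colon\overline{\omega}\to\overline{\omega}$ with $f(0)=0$ and $f(\omega)=\bigvee\{f(n)\mid n\in\omega\}$. The set $W$ of time warps is ordered pointwise, with $\vee$ the pointwise join and $fg:=f\circ g$; $\mathrm{id}$ is the identity and $\top$ maps every $p\ne0$ to $\omega$ and $0$ to $0$. The residuals $\backslash,/$ are the binary operations on $W$ satisfying, for all $f,g,h\in W$: $f\le h/g \iff fg\le h \iff g\le f\backslash h$. For a time warp $f$ define $f^{\ell}:=\mathrm{id}/f$, $f^{r}:=f\backslash\mathrm{id}$, and $f^{o}:=\top\backslash f$. *)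

theory Defs
  imports Main "HOL-Library.Extended_Nat"
begin

text \<open>The chain omega-bar is modelled by enat (finite naturals plus infinity).
  Time warps are functions enat to enat satisfying the predicate below;
  the order is the pointwise function order, join is pointwise sup,
  product is composition.\<close>

definition time_warp :: "(enat \<Rightarrow> enat) \<Rightarrow> bool" where
  "time_warp f \<longleftrightarrow> mono f \<and> f 0 = 0 \<and> f \<infinity> = (SUP n::nat. f (enat n))"

definition tw_top :: "enat \<Rightarrow> enat" where
  "tw_top p = (if p = 0 then 0 else \<infinity>)"

definition ldiv :: "(enat \<Rightarrow> enat) \<Rightarrow> (enat \<Rightarrow> enat) \<Rightarrow> (enat \<Rightarrow> enat)" where
  "ldiv f h = (THE k. time_warp k \<and> (\<forall>g. time_warp g \<longrightarrow> (g \<le> k \<longleftrightarrow> f \<circ> g \<le> h)))"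

definition rdiv :: "(enat \<Rightarrow> enat) \<Rightarrow> (enat \<Rightarrow> enat) \<Rightarrow> (enat \<Rightarrow> enat)" where
  "rdiv h g = (THE k. time_warp k \<and> (\<forall>f. time_warp f \<longrightarrow> (f \<le> k \<longleftrightarrow> f \<circ> g \<le> h)))"

definition tw_l :: "(enat \<Rightarrow> enat) \<Rightarrow> (enat \<Rightarrow> enat)" where
  "tw_l f = rdiv id f"

definition tw_r :: "(enat \<Rightarrow> enat) \<Rightarrow> (enat \<Rightarrow> enat)" where
  "tw_r f = ldiv f id"

definition tw_o :: "(enat \<Rightarrow> enat) \<Rightarrow> (enat \<Rightarrow> enat)" where
  "tw_o f = ldiv tw_top f"

end

theory Submission
  imports Defs
begin

lemma enat_le_Sup_ex:
  fixes A :: "enat set"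
  assumes "enat n \<le> Sup A" and ne: "A \<noteq> {}"
  shows "\<exists>a\<in>A. enat n \<le> a"
proof (cases n)
  case 0
  then show ?thesis using ne by (auto simp: zero_enat_def[symmetric])
next
  case (Suc m)
  then have "enat m < Sup A" using assms
    by (metis Suc_n_not_le_n enat_ord_simps(1) order.not_eq_order_implies_strict order_trans le_SucI nle_le)
  then obtain a where "a \<in> A" "enat m < a" using less_Sup_iff by blast
  then show ?thesis using Suc by (metis Suc_ile_eq)
qed

lemma tw_Sup_le:
  assumes tw: "time_warp a" and ne: "S \<noteq> {}" and le: "\<And>q. q \<in> S \<Longrightarrow> a q \<le> c"
  shows "a (Sup S) \<le> c"
proof (cases "Sup S = \<infinity>")
  case True
  have "a (enat n) \<le> c" for n
  proof -
    have "enat n < Sup S" using True by simp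
    then obtain q where "q \<in> S" "enat n < q" using less_Sup_iff by blast
    then have "a (enat n) \<le> a q" using tw unfolding time_warp_def mono_def by auto
    then show ?thesis using le \<open>q \<in> S\<close> by (meson order_trans)
  qed
  then show ?thesis using True tw unfolding time_warp_def by (auto intro: SUP_least)
next
  case False
  then have "finite S" unfolding Sup_enat_def using ne by (auto split: if_splits)
  then have "Sup S = Max S" using ne unfolding Sup_enat_def by auto
  then have "Sup S \<in> S" using \<open>finite S\<close> ne by auto
  then show ?thesis using le by auto
qed

lemma tw_mono: "time_warp a \<Longrightarrow> x \<le> y \<Longrightarrow> a x \<le> a y"
  unfolding time_warp_def mono_def by auto

lemma tw_Sup:
  assumes tw: "time_warp a" and ne: "S \<noteq> {}"
  shows "a (Sup S) = Sup (a ` S)"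
proof (rule antisym)
  show "a (Sup S) \<le> Sup (a ` S)" using tw_Sup_le[OF tw ne] by (simp add: SUP_upper)
  show "Sup (a ` S) \<le> a (Sup S)" by (rule SUP_least) (metis Sup_upper tw tw_mono)
qed

lemma tw_ext:
  assumes "time_warp a" "time_warp b" "\<And>n. a (enat n) = b (enat n)"
  shows "a = b"
proof
  fix x show "a x = b x"
    using assms unfolding time_warp_def by (cases x) auto
qed

lemma tw_comp:
  assumes a: "time_warp a" and b: "time_warp b"
  shows "time_warp (a \<circ> b)"
proof -
  have "a (b \<infinity>) = (SUP n. a (b (enat n)))"
    using b tw_Sup[OF a, of "range (\<lambda>n. b (enat n))"] unfolding time_warp_def
    by (simp add: image_image)
  then show ?thesis using a b unfolding time_warp_def mono_def by auto
qed

lemma tw_sup: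
  assumes a: "time_warp a" and b: "time_warp b"
  shows "time_warp (sup a b)"
  using a b unfolding time_warp_def mono_def
  by (auto simp: SUP_sup_distrib intro: le_supI1 le_supI2)

lemma tw_id: "time_warp id"
proof -
  have "(SUP n. enat n) = \<infinity>"
  proof -
    have "infinite (range enat)" by (rule range_inj_infinite) (simp add: inj_on_def)
    then show ?thesis unfolding Sup_enat_def by auto
  qed
  then show ?thesis unfolding time_warp_def by (auto simp: mono_def)
qed

lemma tw_top: "time_warp tw_top"
proof -
  have "(SUP n. tw_top (enat n)) = \<infinity>"
  proof -
    have "tw_top (enat 1) \<le> (SUP n. tw_top (enat n))" by (rule SUP_upper) auto
    moreover have "tw_top (enat 1) = \<infinity>" by (simp add: tw_top_def zero_enat_def)
    ultimately show ?thesis by simp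
  qed
  then show ?thesis unfolding time_warp_def mono_def tw_top_def by auto
qed

definition ld0 :: "(enat \<Rightarrow> enat) \<Rightarrow> (enat \<Rightarrow> enat) \<Rightarrow> enat \<Rightarrow> enat" where
  "ld0 f h p = (if p = 0 then 0 else Sup {q. f q \<le> h p})"

definition ld :: "(enat \<Rightarrow> enat) \<Rightarrow> (enat \<Rightarrow> enat) \<Rightarrow> enat \<Rightarrow> enat" where
  "ld f h p = (if p = \<infinity> then (SUP n. ld0 f h (enat n)) else ld0 f h p)"

lemma ld0_mono:
  assumes "time_warp h" "x \<le> y" shows "ld0 f h x \<le> ld0 f h y"
proof -
  have "{q. f q \<le> h x} \<subseteq> {q. f q \<le> h y}" using tw_mono[OF assms] by (auto intro: order_trans)
  then show ?thesis unfolding ld0_def using assms(2) by (auto intro: Sup_subset_mono)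
qed


lemma ld_tw:
  assumes "time_warp h" shows "time_warp (ld f h)"
proof -
  have m: "ld f h x \<le> ld f h y" if xy: "x \<le> y" for x y
  proof (cases y)
    case (enat m)
    obtain k where "x = enat k" using xy enat by (cases x) auto
    then show ?thesis using enat that ld0_mono[OF assms that] by (simp add: ld_def)
  next
    case infinity
    show ?thesis
    proof (cases x)
      case (enat k)
      have "ld0 f h (enat k) \<le> (SUP n. ld0 f h (enat n))" by (rule SUP_upper) simp
      then show ?thesis using infinity enat by (simp add: ld_def)
    qed (simp add: infinity)
  qed
  show ?thesis unfolding time_warp_def mono_def using m
    by (auto simp: ld_def ld0_def zero_enat_def)
qed

lemma ld_comp_le:
  assumes f: "time_warp f" and h: "time_warp h"
  shows "f (ld f h p) \<le> h p"
proof -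
  have fin: "f (ld0 f h p) \<le> h p" for p
  proof (cases "p = 0")
    case True then show ?thesis using f by (simp add: ld0_def time_warp_def)
  next
    case False
    have "0 \<in> {q. f q \<le> h p}" using f by (simp add: time_warp_def)
    then show ?thesis using False unfolding ld0_def by (auto intro!: tw_Sup_le[OF f])
  qed
  show ?thesis
  proof (cases "p = \<infinity>")
    case True
    have "f (SUP n. ld0 f h (enat n)) = (SUP n. f (ld0 f h (enat n)))"
      using tw_Sup[OF f, of "range (\<lambda>n. ld0 f h (enat n))"] by (simp add: image_image)
    also have "\<dots> \<le> (SUP n. h (enat n))" by (rule SUP_mono) (use fin in blast)
    also have "\<dots> = h p" using h True by (simp add: time_warp_def)
    finally show ?thesis using True by (simp add: ld_def)
  next
    case False
    have "ld f h p = ld0 f h p" unfolding ld_def using False by (rule if_not_P)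
    then show ?thesis using fin[of p] by simp
  qed
qed

lemma ld_greatest:
  assumes f: "time_warp f" and h: "time_warp h" and g: "time_warp g" and le: "f \<circ> g \<le> h"
  shows "g \<le> ld f h"
proof -
  have fin: "g (enat n) \<le> ld0 f h (enat n)" for n
  proof (cases "enat n = 0")
    case True then show ?thesis using g by (simp add: time_warp_def)
  next
    case False
    have "g (enat n) \<in> {q. f q \<le> h (enat n)}" using le by (auto simp: le_fun_def)
    then show ?thesis using False unfolding ld0_def by (auto intro: Sup_upper)
  qed
  show ?thesis unfolding le_fun_def
  proof
    fix x show "g x \<le> ld f h x"
    proof (cases x)
      case (enat n) then show ?thesis using fin by (simp add: ld_def)
    next
      case infinity
      then show ?thesis using g fin by (simp add: ld_def time_warp_def SUP_mono')
    qed
  qed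
qed

lemma ldiv_eq:
  assumes f: "time_warp f" and h: "time_warp h"
  shows "ldiv f h = ld f h"
  unfolding ldiv_def
proof (rule the_equality)
  show "time_warp (ld f h) \<and> (\<forall>g. time_warp g \<longrightarrow> (g \<le> ld f h \<longleftrightarrow> f \<circ> g \<le> h))"
  proof (intro conjI allI impI iffI)
    show "time_warp (ld f h)" by (rule ld_tw[OF h])
  next
    fix g assume "time_warp g" "g \<le> ld f h"
    then show "f \<circ> g \<le> h" using ld_comp_le[OF f h] tw_mono[OF f]
      by (auto simp: le_fun_def) (metis order_trans)
  next
    fix g assume "time_warp g" "f \<circ> g \<le> h"
    then show "g \<le> ld f h" using ld_greatest[OF f h] by blast
  qed
next
  fix k assume k: "time_warp k \<and> (\<forall>g. time_warp g \<longrightarrow> (g \<le> k \<longleftrightarrow> f \<circ> g \<le> h))"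
  then have "f \<circ> k \<le> h" by auto
  then have 1: "k \<le> ld f h" using ld_greatest[OF f h] k by blast
  have "f \<circ> ld f h \<le> h" using ld_comp_le[OF f h] by (auto simp: le_fun_def)
  then have "ld f h \<le> k" using k ld_tw[OF h] by blast
  then show "k = ld f h" using 1 by (rule antisym[rotated])
qed


definition rd0 :: "(enat \<Rightarrow> enat) \<Rightarrow> (enat \<Rightarrow> enat) \<Rightarrow> enat \<Rightarrow> enat" where
  "rd0 h g p = Inf (h ` {q. p \<le> g q})"

definition rd :: "(enat \<Rightarrow> enat) \<Rightarrow> (enat \<Rightarrow> enat) \<Rightarrow> enat \<Rightarrow> enat" where
  "rd h g p = (if p = \<infinity> then (SUP n. rd0 h g (enat n)) else rd0 h g p)"

lemma rd0_mono: "x \<le> y \<Longrightarrow> rd0 h g x \<le> rd0 h g y"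
  unfolding rd0_def by (rule INF_superset_mono) auto

lemma rd0_zero: "time_warp h \<Longrightarrow> rd0 h g 0 = 0"
proof -
  assume "time_warp h"
  then have "rd0 h g 0 \<le> h 0" unfolding rd0_def by (auto intro: INF_lower)
  then show ?thesis using \<open>time_warp h\<close> by (simp add: time_warp_def)
qed

lemma rd_tw:
  assumes "time_warp h" shows "time_warp (rd h g)"
proof -
  have m: "rd h g x \<le> rd h g y" if xy: "x \<le> y" for x y
  proof (cases y)
    case (enat m)
    obtain k where "x = enat k" using xy enat by (cases x) auto
    then show ?thesis using enat xy rd0_mono[OF xy] by (simp add: rd_def)
  next
    case infinity
    show ?thesis
    proof (cases x)
      case (enat k)
      have "rd0 h g (enat k) \<le> (SUP n. rd0 h g (enat n))" by (rule SUP_upper) simp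
      then show ?thesis using infinity enat by (simp add: rd_def)
    qed (simp add: infinity)
  qed
  show ?thesis unfolding time_warp_def mono_def using m rd0_zero[OF assms]
    by (auto simp: rd_def)
qed

lemma rd_comp_le:
  assumes "time_warp h"
  shows "rd h g (g q) \<le> h q"
proof (cases "g q = \<infinity>")
  case True
  have "rd0 h g (enat n) \<le> h q" for n
    unfolding rd0_def using True by (intro INF_lower2[of q]) auto
  then show ?thesis using True by (simp add: rd_def SUP_least)
next
  case False
  have "rd h g (g q) = rd0 h g (g q)" unfolding rd_def using False by (rule if_not_P)
  also have "\<dots> \<le> h q" unfolding rd0_def by (auto intro: INF_lower2)
  finally show ?thesis .
qed

lemma rd_greatest:
  assumes k: "time_warp k" and g: "time_warp g" and le: "k \<circ> g \<le> h"
  shows "k \<le> rd h g"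
proof -
  have fin: "k p \<le> rd0 h g p" for p
    unfolding rd0_def
  proof (rule INF_greatest)
    fix q assume "q \<in> {q. p \<le> g q}"
    then have "k p \<le> k (g q)" using tw_mono[OF k] by auto
    also have "\<dots> \<le> h q" using le by (auto simp: le_fun_def)
    finally show "k p \<le> h q" .
  qed
  show ?thesis unfolding le_fun_def
  proof
    fix x show "k x \<le> rd h g x"
    proof (cases x)
      case (enat n) then show ?thesis using fin by (simp add: rd_def)
    next
      case infinity
      then show ?thesis using k fin by (simp add: rd_def time_warp_def SUP_mono')
    qed
  qed
qed

lemma rdiv_eq:
  assumes g: "time_warp g" and h: "time_warp h"
  shows "rdiv h g = rd h g"
  unfolding rdiv_def
proof (rule the_equality)
  show "time_warp (rd h g) \<and> (\<forall>f. time_warp f \<longrightarrow> (f \<le> rd h g \<longleftrightarrow> f \<circ> g \<le> h))"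
  proof (intro conjI allI impI iffI)
    show "time_warp (rd h g)" by (rule rd_tw[OF h])
  next
    fix f assume "time_warp f" "f \<le> rd h g"
    then show "f \<circ> g \<le> h" using rd_comp_le[OF h]
      by (auto simp: le_fun_def) (metis order_trans)
  next
    fix f assume "time_warp f" "f \<circ> g \<le> h"
    then show "f \<le> rd h g" using rd_greatest[OF _ g] by blast
  qed
next
  fix k assume k: "time_warp k \<and> (\<forall>f. time_warp f \<longrightarrow> (f \<le> k \<longleftrightarrow> f \<circ> g \<le> h))"
  then have "k \<circ> g \<le> h" by auto
  then have 1: "k \<le> rd h g" using rd_greatest[OF _ g] k by blast
  have "rd h g \<circ> g \<le> h" using rd_comp_le[OF h] by (auto simp: le_fun_def)
  then have "rd h g \<le> k" using k rd_tw[OF h] by blast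
  then show "k = rd h g" using 1 by (rule antisym[rotated])
qed


lemma top_le_fin: "tw_top x \<le> enat k \<longleftrightarrow> x = 0"
  by (simp add: tw_top_def)

lemma Sup_top_fin: "Sup {q. tw_top q \<le> enat k} = 0"
proof -
  have "{q. tw_top q \<le> enat k} = {0}" by (auto simp: top_le_fin)
  then show ?thesis by simp
qed

lemma Sup_top_inf: "Sup {q. tw_top q \<le> \<infinity>} = \<infinity>"
  by (simp add: top_enat_def[symmetric])

lemma sup0[simp]: "sup (0::enat) x = x" "sup x (0::enat) = x"
  by (simp_all add: sup_enat_def)

lemma ld_fin: "ld f h (enat n) = ld0 f h (enat n)"
  by (simp add: ld_def)

lemma rd_fin: "rd f h (enat n) = rd0 f h (enat n)"
  by (simp add: rd_def)

lemma part_a: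
  assumes f: "time_warp f" and g: "time_warp g"
  shows "ld f g = sup (sup (ld f id \<circ> g) (ld (tw_top \<circ> f) id)) (ld tw_top g)"
proof (rule tw_ext)
  show "time_warp (ld f g)" by (rule ld_tw[OF g])
  show "time_warp (sup (sup (ld f id \<circ> g) (ld (tw_top \<circ> f) id)) (ld tw_top g))"
    by (intro tw_sup tw_comp ld_tw tw_id g)
  fix n
  show "ld f g (enat n) = sup (sup (ld f id \<circ> g) (ld (tw_top \<circ> f) id)) (ld tw_top g) (enat n)"
  proof (cases "n = 0")
    case True
    then show ?thesis using g by (simp add: ld_fin ld0_def zero_enat_def[symmetric] time_warp_def ld_def)
  next
    case False
    then have n0: "enat n \<noteq> 0" by (simp add: zero_enat_def)
    have mid: "ld (tw_top \<circ> f) id (enat n) = Sup {q. f q = 0}"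
      using n0 by (simp add: ld_fin ld0_def top_le_fin)
    show ?thesis
    proof (cases "g (enat n)")
      case infinity
      then show ?thesis using n0 by (simp add: ld_fin ld0_def top_enat_def[symmetric])
    next
      case (enat m)
      have third: "ld tw_top g (enat n) = 0" using n0 enat by (simp add: ld_fin ld0_def Sup_top_fin)
      show ?thesis
      proof (cases "m = 0")
        case True
        then have "g (enat n) = 0" using enat by (simp add: zero_enat_def)
        then show ?thesis using n0 mid third by (simp add: ld_fin ld0_def ld_def)
      next
        case False
        then have m0: "enat m \<noteq> 0" by (simp add: zero_enat_def)
        have "Sup {q. f q = 0} \<le> Sup {q. f q \<le> enat m}" by (rule Sup_subset_mono) auto
        then show ?thesis using n0 m0 mid third enat by (simp add: ld_fin ld0_def sup_absorb1)
      qed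
    qed
  qed
qed

lemma part_b:
  assumes f: "time_warp f" and g: "time_warp g"
  shows "rd g f = sup (g \<circ> rd id f) (ld tw_top (rd id f))"
proof (rule tw_ext)
  show "time_warp (rd g f)" by (rule rd_tw[OF g])
  show "time_warp (sup (g \<circ> rd id f) (ld tw_top (rd id f)))"
    by (intro tw_sup tw_comp ld_tw rd_tw tw_id g)
  fix n
  define T where "T = {q. enat n \<le> f q}"
  have fl: "rd id f (enat n) = Inf T" by (simp add: rd_fin rd0_def T_def)
  show "rd g f (enat n) = sup (g \<circ> rd id f) (ld tw_top (rd id f)) (enat n)"
  proof (cases "n = 0")
    case True
    then show ?thesis using rd0_zero[OF g] rd0_zero[OF tw_id] g
      by (simp add: rd_def ld_def ld0_def zero_enat_def[symmetric] time_warp_def)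
  next
    case False
    then have n0: "enat n \<noteq> 0" by (simp add: zero_enat_def)
    have lhs: "rd g f (enat n) = Inf (g ` T)" by (simp add: rd_fin rd0_def T_def)
    show ?thesis
    proof (cases "T = {}")
      case True
      then show ?thesis using n0 lhs fl by (simp add: ld_fin ld0_def top_enat_def[symmetric])
    next
      case False
      then obtain t where t: "t \<in> T" by auto
      obtain k where k: "enat k \<in> T"
      proof (cases t)
        case (enat k) then show ?thesis using t that by blast
      next
        case infinity
        then have "enat n \<le> (SUP i. f (enat i))" using t f by (simp add: T_def time_warp_def)
        then obtain a where "a \<in> range (\<lambda>i. f (enat i))" "enat n \<le> a"
          using enat_le_Sup_ex by blast
        then show ?thesis using that by (auto simp: T_def)
      qed
      have IT: "Inf T \<in> T" using False unfolding Inf_enat_def by (auto intro: LeastI)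
      have "Inf T \<le> enat k" using k by (rule Inf_lower)
      then obtain j where j: "Inf T = enat j" by (cases "Inf T") auto
      have third: "ld tw_top (rd id f) (enat n) = 0"
        using n0 fl j by (simp add: ld_fin ld0_def Sup_top_fin)
      have "Inf (g ` T) = g (Inf T)"
      proof (rule antisym)
        show "Inf (g ` T) \<le> g (Inf T)" using IT by (rule INF_lower)
        show "g (Inf T) \<le> Inf (g ` T)"
          by (rule INF_greatest) (use tw_mono[OF g] Inf_lower in blast)
      qed
      then show ?thesis using lhs fl third by simp
    qed
  qed
qed

theorem lemma2p4:
  fixes f g :: "enat \<Rightarrow> enat"
  assumes "time_warp f" and "time_warp g"
  shows "ldiv f g = sup (sup (tw_r f \<circ> g) (tw_r (tw_top \<circ> f))) (tw_o g) \<and>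
         rdiv g f = sup (g \<circ> tw_l f) (tw_o (tw_l f))"
proof
  have tf: "time_warp (tw_top \<circ> f)" by (rule tw_comp[OF tw_top assms(1)])
  show "ldiv f g = sup (sup (tw_r f \<circ> g) (tw_r (tw_top \<circ> f))) (tw_o g)"
    unfolding tw_r_def tw_o_def
    using part_a[OF assms] ldiv_eq[OF assms] ldiv_eq[OF assms(1) tw_id] ldiv_eq[OF tf tw_id]
      ldiv_eq[OF tw_top assms(2)] by simp
  have tl: "time_warp (rd id f)" by (rule rd_tw[OF tw_id])
  show "rdiv g f = sup (g \<circ> tw_l f) (tw_o (tw_l f))"
    unfolding tw_l_def tw_o_def
    using part_b[OF assms] rdiv_eq[OF assms(1) assms(2)] rdiv_eq[OF assms(1) tw_id]
      ldiv_eq[OF tw_top tl] by simp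
qed

end
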